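(* Let $1\gg p\gg q\gg\mu\gg n^{-1}$. Let $G$ be a graph with $n$ vertices and $e(G)\ge pn^2$. Then $G$ has a $q$-cut-dense subgraph of order $\mu n$.
   Context: A graph $F$ is $q$-cut-dense if for every partition $V(F)=A\cup B$ into disjoint sets, the number of edges of $F$ between $A$ and $B$ is at least $q|A||B|$. The hierarchy means: $p$ is sufficiently small; given $p$, $q$ is sufficiently small; given $q$, $\mu$ is sufficiently small; given $\mu$, $n$ is sufficiently large. *)

theory Defs
  imports Complex_Main
begin

definition simple_graph :: "'a set \<Rightarrow> 'a set set \<Rightarrow> bool" where
  "simple_graph V E \<longleftrightarrow> finite V \<and> (\<forall>e\<in>E. e \<subseteq> V \<and> card e = 2)"

definition subgraph :: "'a set \<Rightarrow> 'a set set \<Rightarrow> 'a set \<Rightarrow> 'a set set \<Rightarrow> bool" where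
  "subgraph W D V E \<longleftrightarrow> simple_graph W D \<and> W \<subseteq> V \<and> D \<subseteq> E"

definition cross_edges :: "'a set set \<Rightarrow> 'a set \<Rightarrow> 'a set \<Rightarrow> 'a set set" where
  "cross_edges E A B = {e \<in> E. \<exists>a\<in>A. \<exists>b\<in>B. e = {a, b}}"

definition cut_dense :: "real \<Rightarrow> 'a set \<Rightarrow> 'a set set \<Rightarrow> bool" where
  "cut_dense q V E \<longleftrightarrow>
     (\<forall>A B. A \<union> B = V \<longrightarrow> A \<inter> B = {} \<longrightarrow>
        real (card (cross_edges E A B)) \<ge> q * real (card A) * real (card B))"

end

theory Submission
  imports Defs
begin

lemma edges_le_sq:
  assumes "simple_graph W D"
  shows "card D \<le> (card W)^2"
proof -
  have fin: "finite W" using assms by (simp add: simple_graph_def)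
  have "D \<subseteq> (\<lambda>(x,y). {x,y}) ` (W \<times> W)"
  proof
    fix e assume "e \<in> D"
    then have "e \<subseteq> W" "card e = 2" using assms by (auto simp: simple_graph_def)
    then obtain x y where "e = {x,y}" "x \<in> W" "y \<in> W" by (auto simp: card_2_iff)
    then show "e \<in> (\<lambda>(x,y). {x,y}) ` (W \<times> W)" by force
  qed
  then have "card D \<le> card ((\<lambda>(x,y). {x,y}) ` (W \<times> W))"
    by (intro card_mono) (auto simp: fin)
  also have "\<dots> \<le> card (W \<times> W)" by (rule card_image_le) (simp add: fin)
  also have "\<dots> = (card W)^2" by (simp add: card_cartesian_product power2_eq_square)
  finally show ?thesis .
qed

lemma key:
  fixes \<alpha> \<beta> q :: real
  assumes q: "q \<le> 2*\<alpha>"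
  shows "simple_graph W D \<Longrightarrow> card W = k \<Longrightarrow>
    real (card D) > \<alpha>*(real (card W))^2 + \<beta>*real (card W) \<Longrightarrow>
    \<exists>W' D'. subgraph W' D' W D \<and> real (card D') > \<alpha>*(real (card W'))^2 + \<beta>*real (card W') \<and> cut_dense q W' D'"
proof (induction k arbitrary: W D rule: less_induct)
  case (less k)
  have finW: "finite W" using less.prems by (simp add: simple_graph_def)
  have finD: "finite D"
  proof -
    have "D \<subseteq> Pow W" using less.prems(1) by (auto simp: simple_graph_def)
    then show ?thesis using finW by (meson finite_Pow_iff finite_subset)
  qed
  show ?case
  proof (cases "cut_dense q W D")
    case True
    then show ?thesis using less.prems by (auto simp: subgraph_def)
  next
    case False
    then obtain A B where AB: "A \<union> B = W" "A \<inter> B = {}"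
      and cr: "real (card (cross_edges D A B)) < q * real (card A) * real (card B)"
      unfolding cut_dense_def by (auto simp: not_le)
    have finA: "finite A" and finB: "finite B" using AB finW by auto
    have cW: "card W = card A + card B" using AB finA finB card_Un_disjoint by metis
    have Ane: "A \<noteq> {}" using cr by auto
    have Bne: "B \<noteq> {}" using cr by auto
    have "card A > 0" "card B > 0" using Ane Bne finA finB by (auto simp: card_gt_0_iff)
    then have ltA: "card A < k" and ltB: "card B < k" using cW less.prems(2) by auto
    define DA where "DA = {e\<in>D. e \<subseteq> A}"
    define DB where "DB = {e\<in>D. e \<subseteq> B}"
    have sgA: "simple_graph A DA" using less.prems(1) finA by (auto simp: simple_graph_def DA_def)
    have sgB: "simple_graph B DB" using less.prems(1) finB by (auto simp: simple_graph_def DB_def)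
    have sub: "D \<subseteq> DA \<union> DB \<union> cross_edges D A B"
    proof
      fix e assume "e \<in> D"
      then have "e \<subseteq> W" "card e = 2" using less.prems(1) by (auto simp: simple_graph_def)
      then obtain x y where e: "e = {x,y}" "x \<in> W" "y \<in> W" by (auto simp: card_2_iff)
      show "e \<in> DA \<union> DB \<union> cross_edges D A B"
      proof -
        have xAB: "x \<in> A \<or> x \<in> B" and yAB: "y \<in> A \<or> y \<in> B" using e AB by auto
        show ?thesis
        proof (cases "x \<in> A")
          case xA: True
          show ?thesis
          proof (cases "y \<in> A")
            case True then show ?thesis using xA e \<open>e \<in> D\<close> unfolding DA_def by auto
          next
            case False then have "y \<in> B" using yAB by auto
            then show ?thesis using xA e \<open>e \<in> D\<close> unfolding cross_edges_def by blast
          qed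
        next
          case xnA: False then have xB: "x \<in> B" using xAB by auto
          show ?thesis
          proof (cases "y \<in> A")
            case True then have "e = {y, x}" using e by (simp add: insert_commute)
            then show ?thesis using True xB \<open>e \<in> D\<close> unfolding cross_edges_def by blast
          next
            case False then have "y \<in> B" using yAB by auto
            then show ?thesis using xB e \<open>e \<in> D\<close> unfolding DB_def by auto
          qed
        qed
      qed
    qed
    have "card D \<le> card (DA \<union> DB \<union> cross_edges D A B)"
      proof (rule card_mono[OF _ sub])
      have "DA \<subseteq> D" "DB \<subseteq> D" "cross_edges D A B \<subseteq> D"
        unfolding DA_def DB_def cross_edges_def by auto
      then show "finite (DA \<union> DB \<union> cross_edges D A B)"
        using finD by (meson finite_UnI finite_subset)
    qed
    also have "\<dots> \<le> card DA + card DB + card (cross_edges D A B)"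
      using card_Un_le[of "DA \<union> DB" "cross_edges D A B"] card_Un_le[of DA DB] by linarith
    finally have sumle: "real (card D) \<le> real (card DA) + real (card DB) + real (card (cross_edges D A B))"
      by linarith
    have ab0: "0 \<le> real (card A) * real (card B)" by simp
    have "(2*\<alpha> - q) * (real (card A) * real (card B)) \<ge> 0" using q ab0 by simp
    then have poly: "\<alpha>*(real (card A) + real (card B))^2 + \<beta>*(real (card A) + real (card B))
        - q * real (card A) * real (card B) \<ge>
        (\<alpha>*(real (card A))^2 + \<beta>*real (card A)) + (\<alpha>*(real (card B))^2 + \<beta>*real (card B))"
      by (simp add: power2_eq_square algebra_simps)
    have "real (card DA) + real (card DB) >
        (\<alpha>*(real (card A))^2 + \<beta>*real (card A)) + (\<alpha>*(real (card B))^2 + \<beta>*real (card B))"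
      using less.prems(3) sumle cr poly cW by simp
    then consider "real (card DA) > \<alpha>*(real (card A))^2 + \<beta>*real (card A)"
      | "real (card DB) > \<alpha>*(real (card B))^2 + \<beta>*real (card B)" by linarith
    then show ?thesis
    proof cases
      case 1
      from less.IH[OF ltA sgA refl 1] obtain W' D' where
        "subgraph W' D' A DA" "real (card D') > \<alpha>*(real (card W'))^2 + \<beta>*real (card W')" "cut_dense q W' D'"
        by blast
      then show ?thesis using AB unfolding subgraph_def DA_def by blast
    next
      case 2
      from less.IH[OF ltB sgB refl 2] obtain W' D' where
        "subgraph W' D' B DB" "real (card D') > \<alpha>*(real (card W'))^2 + \<beta>*real (card W')" "cut_dense q W' D'"
        by blast
      then show ?thesis using AB unfolding subgraph_def DB_def by blast
    qed
  qed
qed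

theorem lemma3p14:
  shows "\<exists>p0>0. \<forall>p. 0 < p \<and> p \<le> p0 \<longrightarrow>
           (\<exists>q0>0. \<forall>q. 0 < q \<and> q \<le> q0 \<longrightarrow>
             (\<exists>\<mu>0>0. \<forall>\<mu>. 0 < \<mu> \<and> \<mu> \<le> \<mu>0 \<longrightarrow>
               (\<exists>n0::nat. \<forall>n \<ge> n0. \<forall>(V::nat set) E.
                  simple_graph V E \<longrightarrow> card V = n \<longrightarrow>
                  real (card E) \<ge> p * real n ^ 2 \<longrightarrow>
                  (\<exists>W D. subgraph W D V E \<and> real (card W) \<ge> \<mu> * real n \<and>
                         cut_dense q W D))))"
proof (rule exI[of _ 1], intro conjI allI impI)
  fix p :: real assume p: "0 < p \<and> p \<le> 1"
  show "\<exists>q0>0. \<forall>q. 0 < q \<and> q \<le> q0 \<longrightarrow>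
             (\<exists>\<mu>0>0. \<forall>\<mu>. 0 < \<mu> \<and> \<mu> \<le> \<mu>0 \<longrightarrow>
               (\<exists>n0::nat. \<forall>n \<ge> n0. \<forall>(V::nat set) E.
                  simple_graph V E \<longrightarrow> card V = n \<longrightarrow>
                  real (card E) \<ge> p * real n ^ 2 \<longrightarrow>
                  (\<exists>W D. subgraph W D V E \<and> real (card W) \<ge> \<mu> * real n \<and>
                         cut_dense q W D)))"
  proof (rule exI[of _ p], intro conjI allI impI)
    fix q :: real assume q: "0 < q \<and> q \<le> p"
    show "\<exists>\<mu>0>0. \<forall>\<mu>. 0 < \<mu> \<and> \<mu> \<le> \<mu>0 \<longrightarrow>
               (\<exists>n0::nat. \<forall>n \<ge> n0. \<forall>(V::nat set) E.
                  simple_graph V E \<longrightarrow> card V = n \<longrightarrow>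
                  real (card E) \<ge> p * real n ^ 2 \<longrightarrow>
                  (\<exists>W D. subgraph W D V E \<and> real (card W) \<ge> \<mu> * real n \<and>
                         cut_dense q W D))"
    proof (rule exI[of _ "p/4"], intro conjI allI impI)
      fix \<mu> :: real assume mu: "0 < \<mu> \<and> \<mu> \<le> p/4"
      show "\<exists>n0::nat. \<forall>n \<ge> n0. \<forall>(V::nat set) E.
                  simple_graph V E \<longrightarrow> card V = n \<longrightarrow>
                  real (card E) \<ge> p * real n ^ 2 \<longrightarrow>
                  (\<exists>W D. subgraph W D V E \<and> real (card W) \<ge> \<mu> * real n \<and>
                         cut_dense q W D)"
      proof (rule exI[of _ 1], intro allI impI)
        fix n :: nat and V :: "nat set" and E
        assume n: "1 \<le> n" and sg: "simple_graph V E" and cV: "card V = n"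
          and eE: "p * real n ^ 2 \<le> real (card E)"
        have npos: "real n > 0" using n by simp
        have "p/2 * (real n)^2 + (p * real n / 4) * real n < p * real n ^ 2"
          using p npos by (simp add: power2_eq_square algebra_simps)
        then have "real (card E) > p/2 * (real (card V))^2 + (p * real n / 4) * real (card V)"
          using eE cV by simp
        from key[of q "p/2", OF _ sg refl this] q obtain W' D' where
          W': "subgraph W' D' V E" "real (card D') > p/2*(real (card W'))^2 + (p * real n / 4)*real (card W')"
             "cut_dense q W' D'" by auto
        have "card D' \<le> (card W')^2" using W'(1) edges_le_sq by (auto simp: subgraph_def)
        then have le: "real (card D') \<le> (real (card W'))^2" by (metis of_nat_le_iff of_nat_power)
        have nn: "p/2*(real (card W'))^2 \<ge> 0" using p by simp
        have "(p * real n / 4) * real (card W') < (real (card W'))^2" using W'(2) le nn by linarith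
        moreover have "card W' > 0"
        proof (rule ccontr)
          assume "\<not> card W' > 0" then have "card W' = 0" by simp
          then show False using \<open>(p * real n / 4) * real (card W') < (real (card W'))^2\<close> by simp
        qed
        ultimately have "p * real n / 4 < real (card W')"
          by (simp add: power2_eq_square)
        moreover have "\<mu> * real n \<le> p/4 * real n" using mu npos by (intro mult_right_mono) auto
        ultimately show "\<exists>W D. subgraph W D V E \<and> real (card W) \<ge> \<mu> * real n \<and> cut_dense q W D"
          using W' by (intro exI[of _ W'] exI[of _ D']) auto
      qed
    qed (use p in simp)
  qed (use p in simp)
qed simp

end
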